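(* Let $n\ge 1$, $m\ge 2$, $0\le k\le n-1$ with $(m,k)\ne(2,0)$. Then the class $\mathcal{C}^k_{ac}$ of all complete $k$-bounded acyclic CP-nets over $n$ variables of domain size $m$, over the instance space $\mathcal{X}_{swap}$, is not extremal.
   Context: Variables $V=\{v_1,\dots,v_n\}$, each with a finite domain of size $m$. An outcome assigns a value to every variable; $\mathcal{O}_X$ denotes assignments to $X\subseteq V$. A complete CP-net specifies for each $v_i$ a parent set $Pa(v_i)\subseteq V\setminus\{v_i\}$ and, for each context $\gamma\in\mathcal{O}_{Pa(v_i)}$, a strict total order $\succ^{v_i}_\gamma$ on $D_{v_i}$; parents are non-dummy. Acyclic: graph with edges $(v_j,v_i)$, $v_j\in Pa(v_i)$, acyclic; $k$-bounded: all $|Pa(v_i)|\le k$. Improving flip: changing only $v_i$ to a value preferred under $\succ^{v_i}_{o[Pa(v_i)]}$; $o'\succ o$ iff a nonempty sequence of improving flips leads from $o$ to $o'$. A swap is an ordered pair $x=(x.1,x.2)$ of outcomes differing in exactly one variable; $\mathcal{X}_{swap}$ contains exactly one ordering of each such pair (fixed arbitrarily); a CP-net $N$ is the concept $c_N(x)=1$ iff $x.1\succ x.2$. A class $\mathcal{C}$ over $\mathcal{X}$ shatters $S\subseteq\mathcal{X}$ if every labeling of $S$ is realized; it strongly shatters $S$ if some subclass $\mathcal{C}'\subseteq\mathcal{C}$ shatters $S$ and all concepts in $\mathcal{C}'$ agree on every instance of $\mathcal{X}\setminus S$. $\mathcal{C}$ is extremal if it strongly shatters every set it shatters. *)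

theory Defs
  imports "HOL-Library.FuncSet"
begin

(* Variables are 0..<n, every domain is {0..<m}.
   An outcome is an extensional function in {0..<n} \<rightarrow>\<^sub>E {0..<m}. *)
type_synonym outcome = "nat \<Rightarrow> nat"

definition outcomes :: "nat \<Rightarrow> nat \<Rightarrow> outcome set" where
  "outcomes n m = {0..<n} \<rightarrow>\<^sub>E {0..<m}"

(* A CP-net is given by a parent map Pa and conditional preference tables:
   pref i \<gamma> a b  means  a \<succ>^{v_i}_\<gamma> b. *)
type_synonym cpnet = "(nat \<Rightarrow> nat set) \<times> (nat \<Rightarrow> (nat \<Rightarrow> nat) \<Rightarrow> nat \<Rightarrow> nat \<Rightarrow> bool)"

definition contexts :: "nat \<Rightarrow> (nat \<Rightarrow> nat set) \<Rightarrow> nat \<Rightarrow> (nat \<Rightarrow> nat) set" where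
  "contexts m Pa i = Pa i \<rightarrow>\<^sub>E {0..<m}"

definition strict_total_order_on :: "nat set \<Rightarrow> (nat \<Rightarrow> nat \<Rightarrow> bool) \<Rightarrow> bool" where
  "strict_total_order_on D r \<longleftrightarrow>
     (\<forall>a b. r a b \<longrightarrow> a \<in> D \<and> b \<in> D) \<and>
     (\<forall>a. \<not> r a a) \<and>
     (\<forall>a b c. r a b \<longrightarrow> r b c \<longrightarrow> r a c) \<and>
     (\<forall>a\<in>D. \<forall>b\<in>D. a \<noteq> b \<longrightarrow> r a b \<or> r b a)"

(* complete CP-net over n variables with domain size m, non-dummy parents *)
definition is_cpnet :: "nat \<Rightarrow> nat \<Rightarrow> cpnet \<Rightarrow> bool" where
  "is_cpnet n m N \<longleftrightarrow>
     (\<forall>i<n. fst N i \<subseteq> {0..<n} - {i}) \<and>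
     (\<forall>i<n. \<forall>\<gamma>\<in>contexts m (fst N) i. strict_total_order_on {0..<m} (snd N i \<gamma>)) \<and>
     (\<forall>i<n. \<forall>j\<in>fst N i. \<exists>\<gamma>\<in>contexts m (fst N) i. \<exists>\<gamma>'\<in>contexts m (fst N) i.
         (\<forall>l\<in>fst N i - {j}. \<gamma> l = \<gamma>' l) \<and>
         (\<exists>a<m. \<exists>b<m. snd N i \<gamma> a b \<and> \<not> snd N i \<gamma>' a b))"

definition is_acyclic_cpnet :: "nat \<Rightarrow> cpnet \<Rightarrow> bool" where
  "is_acyclic_cpnet n N \<longleftrightarrow> acyclic {(j, i). i < n \<and> j \<in> fst N i}"

definition is_k_bounded :: "nat \<Rightarrow> nat \<Rightarrow> cpnet \<Rightarrow> bool" where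
  "is_k_bounded n k N \<longleftrightarrow> (\<forall>i<n. card (fst N i) \<le> k)"

definition improving_flip :: "nat \<Rightarrow> nat \<Rightarrow> cpnet \<Rightarrow> outcome \<Rightarrow> outcome \<Rightarrow> bool" where
  "improving_flip n m N p q \<longleftrightarrow>
     p \<in> outcomes n m \<and> q \<in> outcomes n m \<and>
     (\<exists>i<n. (\<forall>j. j \<noteq> i \<longrightarrow> p j = q j) \<and>
            snd N i (restrict p (fst N i)) (q i) (p i))"

(* cp_better n m N q p  means  q \<succ> p *)
definition cp_better :: "nat \<Rightarrow> nat \<Rightarrow> cpnet \<Rightarrow> outcome \<Rightarrow> outcome \<Rightarrow> bool" where
  "cp_better n m N q p \<longleftrightarrow> (p, q) \<in> {(p, q). improving_flip n m N p q}\<^sup>+"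

definition is_swap :: "nat \<Rightarrow> nat \<Rightarrow> outcome \<Rightarrow> outcome \<Rightarrow> bool" where
  "is_swap n m p q \<longleftrightarrow> p \<in> outcomes n m \<and> q \<in> outcomes n m \<and>
     (\<exists>i<n. p i \<noteq> q i \<and> (\<forall>j. j \<noteq> i \<longrightarrow> p j = q j))"

definition is_swap_space :: "nat \<Rightarrow> nat \<Rightarrow> (outcome \<times> outcome) set \<Rightarrow> bool" where
  "is_swap_space n m X \<longleftrightarrow>
     (\<forall>x\<in>X. is_swap n m (fst x) (snd x)) \<and>
     (\<forall>p q. is_swap n m p q \<longrightarrow> ((p, q) \<in> X \<longleftrightarrow> (q, p) \<notin> X))"

definition cp_concept :: "nat \<Rightarrow> nat \<Rightarrow> (outcome \<times> outcome) set \<Rightarrow> cpnet \<Rightarrow> (outcome \<times> outcome \<Rightarrow> bool)" where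
  "cp_concept n m X N = (\<lambda>x. x \<in> X \<and> cp_better n m N (fst x) (snd x))"

definition C_ac :: "nat \<Rightarrow> nat \<Rightarrow> nat \<Rightarrow> (outcome \<times> outcome) set \<Rightarrow> (outcome \<times> outcome \<Rightarrow> bool) set" where
  "C_ac n m k X = {cp_concept n m X N | N. is_cpnet n m N \<and> is_acyclic_cpnet n N \<and> is_k_bounded n k N}"

definition shatters :: "('x \<Rightarrow> bool) set \<Rightarrow> 'x set \<Rightarrow> bool" where
  "shatters C S \<longleftrightarrow> (\<forall>L\<subseteq>S. \<exists>c\<in>C. \<forall>x\<in>S. c x = (x \<in> L))"

definition strongly_shatters :: "'x set \<Rightarrow> ('x \<Rightarrow> bool) set \<Rightarrow> 'x set \<Rightarrow> bool" where
  "strongly_shatters X C S \<longleftrightarrow>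
     (\<exists>C'\<subseteq>C. shatters C' S \<and> (\<forall>c\<in>C'. \<forall>c'\<in>C'. \<forall>x\<in>X - S. c x = c' x))"

definition extremal :: "'x set \<Rightarrow> ('x \<Rightarrow> bool) set \<Rightarrow> bool" where
  "extremal X C \<longleftrightarrow> (\<forall>S\<subseteq>X. shatters C S \<longrightarrow> strongly_shatters X C S)"

end

theory Submission
  imports Defs
begin

lemma ctx_mem:
  assumes "is_cpnet n m N" "p \<in> outcomes n m" "u < n"
  shows "restrict p (fst N u) \<in> contexts m (fst N) u"
proof -
  have "fst N u \<subseteq> {0..<n}" using assms(1,3) unfolding is_cpnet_def by auto
  then show ?thesis using assms(2) unfolding contexts_def outcomes_def by (auto simp: PiE_iff)
qed

lemma sto:
  assumes "is_cpnet n m N" "p \<in> outcomes n m" "u < n"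
  shows "strict_total_order_on {0..<m} (snd N u (restrict p (fst N u)))"
  using assms ctx_mem[OF assms] unfolding is_cpnet_def by blast

lemma consistency:
  assumes cp: "is_cpnet n m N" and ac: "is_acyclic_cpnet n N"
  shows "\<not> cp_better n m N p p"
proof
  define E where "E = {(j, i). i < n \<and> j \<in> fst N i}"
  have acE: "acyclic E" using ac unfolding is_acyclic_cpnet_def E_def by simp
  have Esub: "E \<subseteq> {0..<n} \<times> {0..<n}" using cp unfolding E_def is_cpnet_def by auto
  have Etsub: "E\<^sup>+ \<subseteq> {0..<n} \<times> {0..<n}" using trancl_subset_Sigma[OF Esub] .
  define t where "t i = card {j. (j, i) \<in> E\<^sup>+}" for i
  have tlt: "t j < t i" if "i < n" "j \<in> fst N i" for i j
  proof -
    have ji: "(j, i) \<in> E" using that unfolding E_def by auto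
    have "{j'. (j', j) \<in> E\<^sup>+} \<subseteq> {j'. (j', i) \<in> E\<^sup>+}" using ji by (auto intro: trancl_into_trancl)
    moreover have "j \<in> {j'. (j', i) \<in> E\<^sup>+}" using ji by auto
    moreover have "j \<notin> {j'. (j', j) \<in> E\<^sup>+}" using acE unfolding acyclic_def by auto
    moreover have "finite {j'. (j', i) \<in> E\<^sup>+}"
      by (rule finite_subset[of _ "{0..<n}"]) (use Etsub in auto)
    ultimately show ?thesis unfolding t_def by (metis psubset_card_mono psubsetI)
  qed
  have parn: "j < n" if "i < n" "j \<in> fst N i" for i j using cp that unfolding is_cpnet_def by fastforce
  have ctxeq: "restrict pa (fst N w) = restrict qa (fst N w)"
    if "\<forall>u<n. t u < t w \<longrightarrow> pa u = qa u" "w < n" for pa qa w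
    using that tlt parn by (auto simp: restrict_def)
  define L where "L = {(p, q). p \<in> outcomes n m \<and> q \<in> outcomes n m \<and>
     (\<exists>l. (\<forall>u<n. t u < l \<longrightarrow> p u = q u) \<and>
          (\<forall>u<n. t u = l \<longrightarrow> (snd N u (restrict p (fst N u)) (q u) (p u) \<or> q u = p u)) \<and>
          (\<exists>u<n. t u = l \<and> q u \<noteq> p u))}"
  have FL: "{(p, q). improving_flip n m N p q} \<subseteq> L"
  proof safe
    fix p q assume "improving_flip n m N p q"
    then obtain i where po: "p \<in> outcomes n m" and qo: "q \<in> outcomes n m" and i: "i < n"
      and oth: "\<forall>j. j \<noteq> i \<longrightarrow> p j = q j" and pr: "snd N i (restrict p (fst N i)) (q i) (p i)"
      unfolding improving_flip_def by blast
    have "q i \<noteq> p i" using sto[OF cp po i] pr unfolding strict_total_order_on_def by metis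
    then have "\<exists>l. (\<forall>u<n. t u < l \<longrightarrow> p u = q u) \<and>
          (\<forall>u<n. t u = l \<longrightarrow> (snd N u (restrict p (fst N u)) (q u) (p u) \<or> q u = p u)) \<and>
          (\<exists>u<n. t u = l \<and> q u \<noteq> p u)" using i oth pr
      by (intro exI[of _ "t i"]) (metis less_irrefl)
    then show "(p, q) \<in> L" unfolding L_def using po qo by blast
  qed
  have transL: "trans L"
  proof (rule transI)
    fix p q r assume pq: "(p, q) \<in> L" and qr: "(q, r) \<in> L"
    from pq obtain l1 where po: "p \<in> outcomes n m" and qo: "q \<in> outcomes n m"
      and a1: "\<forall>u<n. t u < l1 \<longrightarrow> p u = q u"
      and b1: "\<forall>u<n. t u = l1 \<longrightarrow> (snd N u (restrict p (fst N u)) (q u) (p u) \<or> q u = p u)"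
      and c1: "\<exists>u<n. t u = l1 \<and> q u \<noteq> p u" unfolding L_def by blast
    from qr obtain l2 where ro: "r \<in> outcomes n m"
      and a2: "\<forall>u<n. t u < l2 \<longrightarrow> q u = r u"
      and b2: "\<forall>u<n. t u = l2 \<longrightarrow> (snd N u (restrict q (fst N u)) (r u) (q u) \<or> r u = q u)"
      and c2: "\<exists>u<n. t u = l2 \<and> r u \<noteq> q u" unfolding L_def by blast
    have mk: "(p, r) \<in> L" if "\<forall>u<n. t u < l \<longrightarrow> p u = r u"
       "\<forall>u<n. t u = l \<longrightarrow> (snd N u (restrict p (fst N u)) (r u) (p u) \<or> r u = p u)"
       "\<exists>u<n. t u = l \<and> r u \<noteq> p u" for l
      unfolding L_def using po ro that by blast
    consider "l1 < l2" | "l2 < l1" | "l1 = l2" by linarith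
    then show "(p, r) \<in> L"
    proof cases
      case 1
      show ?thesis
      proof (rule mk[of l1])
        show "\<forall>u<n. t u < l1 \<longrightarrow> p u = r u" using a1 a2 1 by auto
        show "\<forall>u<n. t u = l1 \<longrightarrow> (snd N u (restrict p (fst N u)) (r u) (p u) \<or> r u = p u)"
          using b1 a2 1 by auto
        show "\<exists>u<n. t u = l1 \<and> r u \<noteq> p u" using c1 a2 1 by auto
      qed
    next
      case 2
      have ce: "\<forall>u<n. t u = l2 \<longrightarrow> restrict p (fst N u) = restrict q (fst N u)"
        using ctxeq a1 2 by (metis order.strict_trans)
      show ?thesis
      proof (rule mk[of l2])
        show "\<forall>u<n. t u < l2 \<longrightarrow> p u = r u" using a1 a2 2 by auto
        show "\<forall>u<n. t u = l2 \<longrightarrow> (snd N u (restrict p (fst N u)) (r u) (p u) \<or> r u = p u)"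
          using b2 a1 2 ce by auto
        show "\<exists>u<n. t u = l2 \<and> r u \<noteq> p u" using c2 a1 2 by auto
      qed
    next
      case 3
      have ceq: "restrict p (fst N u) = restrict q (fst N u)" if "u < n" "t u = l1" for u
        using ctxeq a1 that by blast
      have A: "\<forall>u<n. t u < l1 \<longrightarrow> p u = r u" using a1 a2 3 by auto
      have B: "\<forall>u<n. t u = l1 \<longrightarrow> (snd N u (restrict p (fst N u)) (r u) (p u) \<or> r u = p u)"
      proof (intro allI impI)
        fix u assume u: "u < n" "t u = l1"
        have st: "strict_total_order_on {0..<m} (snd N u (restrict p (fst N u)))" using sto[OF cp po u(1)] .
        show "snd N u (restrict p (fst N u)) (r u) (p u) \<or> r u = p u"
          using b1 b2 u 3 ceq[OF u(1,2)] st unfolding strict_total_order_on_def by metis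
      qed
      obtain u where u: "u < n" "t u = l1" "q u \<noteq> p u" using c1 by blast
      have st: "strict_total_order_on {0..<m} (snd N u (restrict p (fst N u)))" using sto[OF cp po u(1)] .
      have "r u \<noteq> p u"
        using b1 b2 u 3 ceq[OF u(1,2)] st unfolding strict_total_order_on_def by metis
      then show ?thesis using mk[of l1] A B u by blast
    qed
  qed
  assume "cp_better n m N p p"
  then have "(p, p) \<in> {(p, q). improving_flip n m N p q}\<^sup>+" unfolding cp_better_def .
  then have "(p, p) \<in> L\<^sup>+" using trancl_mono FL by blast
  then have "(p, p) \<in> L" using trancl_id[OF transL] by simp
  then show False unfolding L_def by auto
qed


lemma swap_pref:
  assumes cp: "is_cpnet n m N" and ac: "is_acyclic_cpnet n N"
    and po: "p \<in> outcomes n m" and qo: "q \<in> outcomes n m" and i: "i < n"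
    and ne: "p i \<noteq> q i" and oth: "\<forall>j. j \<noteq> i \<longrightarrow> p j = q j"
  shows "cp_better n m N p q \<longleftrightarrow> snd N i (restrict p (fst N i)) (p i) (q i)"
proof -
  have iP: "i \<notin> fst N i" using cp i unfolding is_cpnet_def by auto
  have req: "restrict q (fst N i) = restrict p (fst N i)"
    using oth iP by (intro restrict_ext) auto
  have fl: "improving_flip n m N q p" if "snd N i (restrict p (fst N i)) (p i) (q i)"
    unfolding improving_flip_def using po qo i oth that req by metis
  have fl2: "improving_flip n m N p q" if "snd N i (restrict p (fst N i)) (q i) (p i)"
    unfolding improving_flip_def using po qo i oth that by metis
  have st: "strict_total_order_on {0..<m} (snd N i (restrict p (fst N i)))" using sto[OF cp po i] .
  have pm: "p i < m" "q i < m" using po qo i unfolding outcomes_def by (auto simp: PiE_iff)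
  show ?thesis
  proof
    assume b: "cp_better n m N p q"
    show "snd N i (restrict p (fst N i)) (p i) (q i)"
    proof (rule ccontr)
      assume nb: "\<not> snd N i (restrict p (fst N i)) (p i) (q i)"
      then have "snd N i (restrict p (fst N i)) (q i) (p i)"
        using st ne pm unfolding strict_total_order_on_def by (metis atLeastLessThan_iff zero_le)
      then have "(p, q) \<in> {(p, q). improving_flip n m N p q}\<^sup>+" using fl2 by blast
      moreover have "(q, p) \<in> {(p, q). improving_flip n m N p q}\<^sup>+" using b unfolding cp_better_def .
      ultimately have "cp_better n m N q q" unfolding cp_better_def by (meson trancl_trans)
      then show False using consistency[OF cp ac] by blast
    qed
  next
    assume "snd N i (restrict p (fst N i)) (p i) (q i)"
    then show "cp_better n m N p q" using fl unfolding cp_better_def by blast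
  qed
qed

definition sw :: "(outcome \<times> outcome) set \<Rightarrow> outcome \<Rightarrow> outcome \<Rightarrow> outcome \<times> outcome" where
  "sw X p q = (if (p, q) \<in> X then (p, q) else (q, p))"

lemma sw_in:
  assumes X: "is_swap_space n m X" and po: "p \<in> outcomes n m" and qo: "q \<in> outcomes n m" and i: "i < n"
    and ne: "p i \<noteq> q i" and oth: "\<forall>j. j \<noteq> i \<longrightarrow> p j = q j"
  shows "sw X p q \<in> X"
proof -
  have "is_swap n m p q" unfolding is_swap_def using po qo i ne oth by blast
  then show ?thesis using X unfolding is_swap_space_def sw_def by auto
qed

lemma concept_sw:
  assumes cp: "is_cpnet n m N" and ac: "is_acyclic_cpnet n N" and X: "is_swap_space n m X"
    and po: "p \<in> outcomes n m" and qo: "q \<in> outcomes n m" and i: "i < n"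
    and ne: "p i \<noteq> q i" and oth: "\<forall>j. j \<noteq> i \<longrightarrow> p j = q j"
  shows "cp_concept n m X N (sw X p q) = (snd N i (restrict p (fst N i)) (p i) (q i) = ((p, q) \<in> X))"
proof (cases "(p, q) \<in> X")
  case True
  then show ?thesis unfolding sw_def cp_concept_def using swap_pref[OF cp ac po qo i ne oth] by simp
next
  case False
  have inX: "(q, p) \<in> X" using sw_in[OF X po qo i ne oth] False unfolding sw_def by simp
  have iP: "i \<notin> fst N i" using cp i unfolding is_cpnet_def by auto
  have req: "restrict q (fst N i) = restrict p (fst N i)"
    using oth iP by (intro restrict_ext) auto
  have sp: "cp_better n m N q p \<longleftrightarrow> snd N i (restrict p (fst N i)) (q i) (p i)"
    using swap_pref[OF cp ac qo po i] ne oth req by metis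
  have st: "strict_total_order_on {0..<m} (snd N i (restrict p (fst N i)))" using sto[OF cp po i] .
  have pm: "p i < m" "q i < m" using po qo i unfolding outcomes_def by (auto simp: PiE_iff)
  have "snd N i (restrict p (fst N i)) (q i) (p i) \<longleftrightarrow> \<not> snd N i (restrict p (fst N i)) (p i) (q i)"
    using st ne pm unfolding strict_total_order_on_def by (metis atLeastLessThan_iff zero_le)
  then show ?thesis unfolding sw_def cp_concept_def using False inX sp by simp
qed

definition sepnet :: "nat \<Rightarrow> (nat \<Rightarrow> nat \<Rightarrow> nat) \<Rightarrow> cpnet" where
  "sepnet m r = ((\<lambda>_. {}), (\<lambda>i \<gamma> a b. a < m \<and> b < m \<and> r i b < r i a))"

lemma sep_class:
  assumes inj: "\<And>i. inj (r i)"
  shows "is_cpnet n m (sepnet m r)" "is_acyclic_cpnet n (sepnet m r)" "is_k_bounded n k (sepnet m r)"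
proof -
  have "strict_total_order_on {0..<m} (snd (sepnet m r) i \<gamma>)" for i \<gamma>
    unfolding strict_total_order_on_def sepnet_def using inj
    by (auto simp: inj_def) (metis linorder_neqE_nat)
  then show "is_cpnet n m (sepnet m r)" unfolding is_cpnet_def by (simp add: sepnet_def)
  show "is_acyclic_cpnet n (sepnet m r)" unfolding is_acyclic_cpnet_def sepnet_def acyclic_def by simp
  show "is_k_bounded n k (sepnet m r)" unfolding is_k_bounded_def sepnet_def by simp
qed

lemma inC:
  assumes "is_cpnet n m N" "is_acyclic_cpnet n N" "is_k_bounded n k N"
  shows "cp_concept n m X N \<in> C_ac n m k X"
  using assms unfolding C_ac_def by blast

lemma fromC:
  assumes "c \<in> C_ac n m k X"
  obtains N where "is_cpnet n m N" "is_acyclic_cpnet n N" "c = cp_concept n m X N"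
  using assms unfolding C_ac_def by blast

definition g :: "bool \<Rightarrow> bool \<Rightarrow> nat \<Rightarrow> nat" where
  "g d1 d2 a = (if a = 0 then (if d1 then 2 else (if d2 then 1 else 0))
     else if a = 1 then (if d1 then (if d2 then 1 else 0) else (if d2 then 2 else 1))
     else if a = 2 then (if d1 then (if d2 then 0 else 1) else (if d2 then 0 else 2)) else a)"

lemma g_props: "(g d1 d2 1 < g d1 d2 0) = d1" "(g d1 d2 2 < g d1 d2 1) = d2" "inj (g d1 d2)"
  unfolding g_def inj_def by auto

definition oo :: "nat \<Rightarrow> nat \<Rightarrow> nat \<Rightarrow> outcome" where
  "oo n a b = restrict ((\<lambda>_. 0::nat)(0 := a, 1 := b)) {0..<n}"

lemma oo_out: "a < m \<Longrightarrow> b < m \<Longrightarrow> oo n a b \<in> outcomes n m"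
  unfolding oo_def outcomes_def by (auto simp: PiE_iff)


lemma caseA:
  assumes n: "1 \<le> n" and m: "3 \<le> m" and X: "is_swap_space n m X"
  shows "\<not> extremal X (C_ac n m k X)"
proof
  assume ext: "extremal X (C_ac n m k X)"
  define ou where "ou a = oo n a 0" for a
  have ouo: "ou a \<in> outcomes n m" if "a < m" for a using oo_out[of a m 0 n] that m unfolding ou_def by auto
  have ou0: "ou a 0 = a" for a using n unfolding ou_def oo_def by auto
  have ouj: "\<forall>j. j \<noteq> 0 \<longrightarrow> ou a j = ou b j" for a b unfolding ou_def oo_def by auto
  have oueq: "ou a = ou b \<longleftrightarrow> a = b" for a b using ou0 by metis
  have n0: "0 < n" using n by simp
  define x1 where "x1 = sw X (ou 0) (ou 1)"
  define x2 where "x2 = sw X (ou 1) (ou 2)"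
  define x3 where "x3 = sw X (ou 0) (ou 2)"
  define S where "S = {x1, x2}"
  have m3: "0 < m" "1 < m" "2 < m" using m by auto
  have SX: "S \<subseteq> X" unfolding S_def x1_def x2_def
    using sw_in[OF X ouo ouo n0] ou0 ouj m3 by auto
  have x3X: "x3 \<in> X" unfolding x3_def using sw_in[OF X ouo ouo n0] ou0 ouj m3 by auto
  have x12: "x1 \<noteq> x2" unfolding x1_def x2_def sw_def by (auto simp: oueq)
  have x3S: "x3 \<notin> S" unfolding S_def x1_def x2_def x3_def sw_def by (auto simp: oueq)
  have keyN: "strict_total_order_on {0..<m} (snd N 0 (restrict (ou 0) (fst N 0))) \<and>
     cp_concept n m X N x1 = (snd N 0 (restrict (ou 0) (fst N 0)) 0 1 = ((ou 0, ou 1) \<in> X))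
     \<and> cp_concept n m X N x2 = (snd N 0 (restrict (ou 0) (fst N 0)) 1 2 = ((ou 1, ou 2) \<in> X))
     \<and> cp_concept n m X N x3 = (snd N 0 (restrict (ou 0) (fst N 0)) 0 2 = ((ou 0, ou 2) \<in> X))"
    if cp: "is_cpnet n m N" and ac: "is_acyclic_cpnet n N" for N
  proof -
    have iP: "0 \<notin> fst N 0" using cp n0 unfolding is_cpnet_def by auto
    have req: "restrict (ou a) (fst N 0) = restrict (ou 0) (fst N 0)" for a
      using ouj iP by (intro restrict_ext) metis
    define R where "R = snd N 0 (restrict (ou 0) (fst N 0))"
    have st: "strict_total_order_on {0..<m} R" unfolding R_def using sto[OF cp ouo n0] m3 by auto
    have cs: "cp_concept n m X N (sw X (ou a) (ou b)) = (R a b = ((ou a, ou b) \<in> X))"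
      if "a < m" "b < m" "a \<noteq> b" for a b
      using concept_sw[OF cp ac X ouo[OF that(1)] ouo[OF that(2)] n0] that ou0 ouj req
      unfolding R_def by metis
    have "(0::nat) \<noteq> 1" "(1::nat) \<noteq> 2" "(0::nat) \<noteq> 2" by auto
    then show ?thesis unfolding x1_def x2_def x3_def R_def[symmetric]
      using st cs[of 0 1] cs[of 1 2] cs[of 0 2] m3 by simp
  qed
  have shat: "shatters (C_ac n m k X) S"
    unfolding shatters_def
  proof (intro allI impI)
    fix L assume "L \<subseteq> S"
    define d1 where "d1 = ((x1 \<in> L) = ((ou 0, ou 1) \<in> X))"
    define d2 where "d2 = ((x2 \<in> L) = ((ou 1, ou 2) \<in> X))"
    define N where "N = sepnet m (\<lambda>i. g d1 d2)"
    have cl: "is_cpnet n m N" "is_acyclic_cpnet n N" "is_k_bounded n k N"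
      unfolding N_def by (rule sep_class, rule g_props(3))+
    have R: "snd N 0 \<gamma> 0 1 = d1" "snd N 0 \<gamma> 1 2 = d2" for \<gamma>
      unfolding N_def sepnet_def using g_props(1,2) m3 by auto
    have "cp_concept n m X N x1 = (x1 \<in> L)" "cp_concept n m X N x2 = (x2 \<in> L)"
      using keyN[OF cl(1,2)] R[of "restrict (ou 0) (fst N 0)"] unfolding d1_def d2_def by (simp_all, metis+)
    then have "\<forall>x\<in>S. cp_concept n m X N x = (x \<in> L)" unfolding S_def by blast
    then show "\<exists>c\<in>C_ac n m k X. \<forall>x\<in>S. c x = (x \<in> L)" using inC[OF cl] by blast
  qed
  have "strongly_shatters X (C_ac n m k X) S" using ext SX shat unfolding extremal_def by blast
  then obtain C' where C': "C' \<subseteq> C_ac n m k X" "shatters C' S"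
    and agr: "\<forall>c\<in>C'. \<forall>c'\<in>C'. \<forall>x\<in>X - S. c x = c' x"
    unfolding strongly_shatters_def by blast
  obtain c0 where c0: "c0 \<in> C'" using C'(2) unfolding shatters_def by blast
  define f where "f = (c0 x3 = ((ou 0, ou 2) \<in> X))"
  define L where "L = {x \<in> S. (x = x1 \<and> ((\<not> f) = ((ou 0, ou 1) \<in> X))) \<or> (x = x2 \<and> ((\<not> f) = ((ou 1, ou 2) \<in> X)))}"
  have LS: "L \<subseteq> S" unfolding L_def by blast
  obtain c where c: "c \<in> C'" "\<forall>x\<in>S. c x = (x \<in> L)"
    using C'(2)[unfolded shatters_def, rule_format, OF LS] by blast
  have c3: "c x3 = c0 x3" using agr c(1) c0 x3X x3S by blast
  have cC: "c \<in> C_ac n m k X" using C'(1) c(1) by blast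
  obtain N where cp: "is_cpnet n m N" and ac: "is_acyclic_cpnet n N" and cN: "c = cp_concept n m X N"
    by (rule fromC[OF cC])
  define R where "R = snd N 0 (restrict (ou 0) (fst N 0))"
  have k: "strict_total_order_on {0..<m} R" "c x1 = (R 0 1 = ((ou 0, ou 1) \<in> X))"
     "c x2 = (R 1 2 = ((ou 1, ou 2) \<in> X))" "c x3 = (R 0 2 = ((ou 0, ou 2) \<in> X))"
    using keyN[OF cp ac] unfolding cN[symmetric] R_def by auto
  have l1: "c x1 = (x1 \<in> L)" "c x2 = (x2 \<in> L)" using c(2) unfolding S_def by auto
  have l2: "x1 \<in> L \<longleftrightarrow> ((\<not> f) = ((ou 0, ou 1) \<in> X))" using x12 unfolding L_def S_def by blast
  have l3: "x2 \<in> L \<longleftrightarrow> ((\<not> f) = ((ou 1, ou 2) \<in> X))" using x12 unfolding L_def S_def by blast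
  have r01: "R 0 1 = (\<not> f)" using k(2) l1(1) l2 by blast
  have r12: "R 1 2 = (\<not> f)" using k(3) l1(2) l3 by blast
  have r02: "R 0 2 = f" using k(4) c3 unfolding f_def by blast
  have tr: "R a c' \<Longrightarrow> R c' d \<Longrightarrow> R a d" for a c' d using k(1) unfolding strict_total_order_on_def by blast
  have irr: "\<not> R a a" for a using k(1) unfolding strict_total_order_on_def by blast
  have tot: "a < m \<Longrightarrow> b < m \<Longrightarrow> a \<noteq> b \<Longrightarrow> R a b \<or> R b a" for a b
    using k(1) unfolding strict_total_order_on_def by auto
  show False
  proof (cases f)
    case True
    have "R 1 0" using tot[of 0 1] r01 True m3 by auto
    moreover have "R 2 1" using tot[of 1 2] r12 True m3 by auto
    ultimately have "R 2 0" using tr by blast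
    then show False using True r02 tr irr by blast
  next
    case False
    then show False using r01 r12 r02 tr irr by blast
  qed
qed


lemma caseB:
  assumes n: "2 \<le> n" and m: "2 \<le> m" and X: "is_swap_space n m X"
  shows "\<not> extremal X (C_ac n m k X)"
proof
  assume ext: "extremal X (C_ac n m k X)"
  define ov where "ov a b = oo n a b" for a b
  have m2: "0 < m" "1 < m" using m by auto
  have ovo: "ov a b \<in> outcomes n m" if "a < m" "b < m" for a b using oo_out[of a m b n] that unfolding ov_def by auto
  have ov0: "ov a b 0 = a" for a b using n unfolding ov_def oo_def by auto
  have ov1: "ov a b 1 = b" for a b using n unfolding ov_def oo_def by auto
  have ovj0: "\<forall>j. j \<noteq> 0 \<longrightarrow> ov a b j = ov a' b j" for a a' b unfolding ov_def oo_def by auto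
  have ovj1: "\<forall>j. j \<noteq> 1 \<longrightarrow> ov a b j = ov a b' j" for a b b' unfolding ov_def oo_def by auto
  have oveq: "ov a b = ov a' b' \<longleftrightarrow> a = a' \<and> b = b'" for a b a' b' using ov0 ov1 by metis
  have n0: "0 < n" and n1: "1 < n" using n by auto
  define x1 where "x1 = sw X (ov 0 0) (ov 1 0)"
  define x2 where "x2 = sw X (ov 0 0) (ov 0 1)"
  define y1 where "y1 = sw X (ov 0 1) (ov 1 1)"
  define y2 where "y2 = sw X (ov 1 0) (ov 1 1)"
  define S where "S = {x1, x2}"
  have sw0: "sw X (ov 0 b) (ov 1 b) \<in> X" if "b < m" for b
    using sw_in[OF X ovo ovo n0] ov0 ovj0 m2 that by auto
  have sw1: "sw X (ov a 0) (ov a 1) \<in> X" if "a < m" for a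
    using sw_in[OF X ovo ovo n1] ov1 ovj1 m2 that by auto
  have SX: "S \<subseteq> X" unfolding S_def x1_def x2_def using sw0 sw1 m2 by auto
  have y1X: "y1 \<in> X" unfolding y1_def using sw0 m2 by auto
  have y2X: "y2 \<in> X" unfolding y2_def using sw1 m2 by auto
  have x12: "x1 \<noteq> x2" unfolding x1_def x2_def sw_def by (auto simp: oveq)
  have y1S: "y1 \<notin> S" unfolding S_def x1_def x2_def y1_def sw_def by (auto simp: oveq)
  have y2S: "y2 \<notin> S" unfolding S_def x1_def x2_def y2_def sw_def by (auto simp: oveq)
  have keyN: "cp_concept n m X N (sw X (ov 0 b) (ov 1 b)) = (snd N 0 (restrict (ov 0 b) (fst N 0)) 0 1 = ((ov 0 b, ov 1 b) \<in> X))
    \<and> cp_concept n m X N (sw X (ov a 0) (ov a 1)) = (snd N 1 (restrict (ov a 0) (fst N 1)) 0 1 = ((ov a 0, ov a 1) \<in> X))"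
    if cp: "is_cpnet n m N" and ac: "is_acyclic_cpnet n N" and ab: "a < m" "b < m" for N a b
  proof
    show "cp_concept n m X N (sw X (ov 0 b) (ov 1 b)) = (snd N 0 (restrict (ov 0 b) (fst N 0)) 0 1 = ((ov 0 b, ov 1 b) \<in> X))"
      using concept_sw[OF cp ac X ovo[OF m2(1) ab(2)] ovo[OF m2(2) ab(2)] n0] ov0 ovj0 by simp
    show "cp_concept n m X N (sw X (ov a 0) (ov a 1)) = (snd N 1 (restrict (ov a 0) (fst N 1)) 0 1 = ((ov a 0, ov a 1) \<in> X))"
      using concept_sw[OF cp ac X ovo[OF ab(1) m2(1)] ovo[OF ab(1) m2(2)] n1] ov1 ovj1 by simp
  qed
  have shat: "shatters (C_ac n m k X) S"
    unfolding shatters_def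
  proof (intro allI impI)
    fix L assume "L \<subseteq> S"
    define d1 where "d1 = ((x1 \<in> L) = ((ov 0 0, ov 1 0) \<in> X))"
    define d2 where "d2 = ((x2 \<in> L) = ((ov 0 0, ov 0 1) \<in> X))"
    define N where "N = sepnet m (\<lambda>i. g (if i = 0 then d1 else if i = 1 then d2 else True) True)"
    have cl: "is_cpnet n m N" "is_acyclic_cpnet n N" "is_k_bounded n k N"
      unfolding N_def by (rule sep_class, rule g_props(3))+
    have R: "snd N 0 \<gamma> 0 1 = d1" "snd N 1 \<gamma> 0 1 = d2" for \<gamma>
      unfolding N_def sepnet_def using g_props(1) m2 by auto
    have "cp_concept n m X N x1 = (x1 \<in> L)" "cp_concept n m X N x2 = (x2 \<in> L)"
      using keyN[OF cl(1,2) m2(1) m2(1)] R unfolding d1_def d2_def x1_def x2_def by (simp_all, metis+)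
    then have "\<forall>x\<in>S. cp_concept n m X N x = (x \<in> L)" unfolding S_def by blast
    then show "\<exists>c\<in>C_ac n m k X. \<forall>x\<in>S. c x = (x \<in> L)" using inC[OF cl] by blast
  qed
  have "strongly_shatters X (C_ac n m k X) S" using ext SX shat unfolding extremal_def by blast
  then obtain C' where C': "C' \<subseteq> C_ac n m k X" "shatters C' S"
    and agr: "\<forall>c\<in>C'. \<forall>c'\<in>C'. \<forall>x\<in>X - S. c x = c' x"
    unfolding strongly_shatters_def by blast
  obtain c0 where c0: "c0 \<in> C'" using C'(2) unfolding shatters_def by blast
  define f1 where "f1 = (c0 y1 = ((ov 0 1, ov 1 1) \<in> X))"
  define f2 where "f2 = (c0 y2 = ((ov 1 0, ov 1 1) \<in> X))"
  define L where "L = {x \<in> S. (x = x1 \<and> ((\<not> f1) = ((ov 0 0, ov 1 0) \<in> X))) \<or> (x = x2 \<and> ((\<not> f2) = ((ov 0 0, ov 0 1) \<in> X)))}"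
  have LS: "L \<subseteq> S" unfolding L_def by blast
  obtain c where c: "c \<in> C'" "\<forall>x\<in>S. c x = (x \<in> L)"
    using C'(2)[unfolded shatters_def, rule_format, OF LS] by blast
  have c3: "c y1 = c0 y1" "c y2 = c0 y2" using agr c(1) c0 y1X y1S y2X y2S by blast+
  have cC: "c \<in> C_ac n m k X" using C'(1) c(1) by blast
  obtain N where cp: "is_cpnet n m N" and ac: "is_acyclic_cpnet n N" and cN: "c = cp_concept n m X N"
    by (rule fromC[OF cC])
  have k1: "c x1 = (snd N 0 (restrict (ov 0 0) (fst N 0)) 0 1 = ((ov 0 0, ov 1 0) \<in> X))"
     "c x2 = (snd N 1 (restrict (ov 0 0) (fst N 1)) 0 1 = ((ov 0 0, ov 0 1) \<in> X))"
    using keyN[OF cp ac m2(1) m2(1)] unfolding cN x1_def x2_def by auto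
  have k2: "c y1 = (snd N 0 (restrict (ov 0 1) (fst N 0)) 0 1 = ((ov 0 1, ov 1 1) \<in> X))"
    using keyN[OF cp ac m2(1) m2(2)] unfolding cN y1_def by auto
  have k3: "c y2 = (snd N 1 (restrict (ov 1 0) (fst N 1)) 0 1 = ((ov 1 0, ov 1 1) \<in> X))"
    using keyN[OF cp ac m2(2) m2(1)] unfolding cN y2_def by auto
  have l1: "c x1 = (x1 \<in> L)" "c x2 = (x2 \<in> L)" using c(2) unfolding S_def by auto
  have l2: "x1 \<in> L \<longleftrightarrow> ((\<not> f1) = ((ov 0 0, ov 1 0) \<in> X))" using x12 unfolding L_def S_def by blast
  have l3: "x2 \<in> L \<longleftrightarrow> ((\<not> f2) = ((ov 0 0, ov 0 1) \<in> X))" using x12 unfolding L_def S_def by blast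
  have a1: "snd N 0 (restrict (ov 0 0) (fst N 0)) 0 1 = (\<not> f1)" using k1(1) l1(1) l2 by blast
  have a2: "snd N 0 (restrict (ov 0 1) (fst N 0)) 0 1 = f1" using k2 c3(1) unfolding f1_def by blast
  have b1: "snd N 1 (restrict (ov 0 0) (fst N 1)) 0 1 = (\<not> f2)" using k1(2) l1(2) l3 by blast
  have b2: "snd N 1 (restrict (ov 1 0) (fst N 1)) 0 1 = f2" using k3 c3(2) unfolding f2_def by blast
  have P0: "1 \<in> fst N 0"
  proof (rule ccontr)
    assume "1 \<notin> fst N 0"
    then have "restrict (ov 0 0) (fst N 0) = restrict (ov 0 1) (fst N 0)"
      using ovj1 by (intro restrict_ext) metis
    then show False using a1 a2 by simp
  qed
  have P1: "0 \<in> fst N 1"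
  proof (rule ccontr)
    assume "0 \<notin> fst N 1"
    then have "restrict (ov 0 0) (fst N 1) = restrict (ov 1 0) (fst N 1)"
      using ovj0 by (intro restrict_ext) metis
    then show False using b1 b2 by simp
  qed
  have "(1, 0) \<in> {(j, i). i < n \<and> j \<in> fst N i}" using P0 n0 by simp
  moreover have "(0, 1) \<in> {(j, i). i < n \<and> j \<in> fst N i}" using P1 n1 by simp
  ultimately have "(0::nat, 0::nat) \<in> {(j, i). i < n \<and> j \<in> fst N i}\<^sup>+" by (meson trancl.simps)
  then show False using ac unfolding is_acyclic_cpnet_def acyclic_def by blast
qed

theorem proposition5:
  fixes n m k :: nat and X :: "(outcome \<times> outcome) set"
  assumes "n \<ge> 1" and "m \<ge> 2" and "k \<le> n - 1" and "(m, k) \<noteq> (2, 0)"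
    and "is_swap_space n m X"
  shows "\<not> extremal X (C_ac n m k X)"
proof (cases "m \<ge> 3")
  case True
  then show ?thesis using caseA assms by blast
next
  case False
  then have "m = 2" "k \<ge> 1" using assms by auto
  then have "n \<ge> 2" using assms by linarith
  then show ?thesis using caseB assms by blast
qed

end
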